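(* Let $(R,\mathfrak{m})$ be a commutative Artinian local ring with identity, $\mathfrak{m}\neq0$ and $\mathfrak{m}^2=0$. For every integer $n\ge7$, $3\in L(x^n)$.
   Context: A nonunit polynomial in $R[x]$ is irreducible if in any factorization into two polynomials one factor is a unit of $R[x]$. A positive integer $k$ is a length of $f$ if $f$ is a product of $k$ irreducible polynomials of $R[x]$; $L(f)$ denotes the set of lengths of $f$. *)

theory Defs
  imports "HOL-Computational_Algebra.Polynomial" "HOL-Computational_Algebra.Factorial_Ring"
begin

definition is_ideal :: "'a::comm_ring_1 set \<Rightarrow> bool" where
  "is_ideal I \<longleftrightarrow> 0 \<in> I \<and> (\<forall>a\<in>I. \<forall>b\<in>I. a + b \<in> I) \<and> (\<forall>a\<in>I. \<forall>r. r * a \<in> I)"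

definition artinian_ring :: "'a::comm_ring_1 itself \<Rightarrow> bool" where
  "artinian_ring _ \<longleftrightarrow>
     (\<forall>f :: nat \<Rightarrow> 'a set. (\<forall>n. is_ideal (f n)) \<and> (\<forall>n. f (Suc n) \<subseteq> f n)
        \<longrightarrow> (\<exists>N. \<forall>n\<ge>N. f n = f N))"

text \<open>Local ring: the nonunits form an ideal (it is then the unique maximal ideal).\<close>
definition local_ring :: "'a::comm_ring_1 itself \<Rightarrow> bool" where
  "local_ring _ \<longleftrightarrow> is_ideal {a :: 'a. \<not> a dvd 1}"

definition max_ideal :: "'a::comm_ring_1 set" where
  "max_ideal = {a. \<not> a dvd 1}"

definition lengths :: "'a::comm_ring_1 poly \<Rightarrow> nat set" where
  "lengths f = {k. k > 0 \<and> (\<exists>ps. length ps = k \<and> (\<forall>p\<in>set ps. irreducible p) \<and> prod_list ps = f)}"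

end

theory Submission imports Defs begin

lemma ideal_sum: assumes "is_ideal I" "\<And>i. i \<in> A \<Longrightarrow> f i \<in> I" shows "sum f A \<in> I"
proof (cases "finite A")
  case True thus ?thesis using assms(2)
    by (induction A rule: finite_induct) (use assms(1) in \<open>auto simp: is_ideal_def\<close>)
next
  case False thus ?thesis using assms(1) by (simp add: is_ideal_def)
qed

lemma nonunit_multL: "\<not> (a::'a::comm_ring_1) dvd 1 \<Longrightarrow> \<not> (a*b) dvd 1"
  using dvd_mult_left by blast
lemma nonunit_multR: "\<not> (b::'a::comm_ring_1) dvd 1 \<Longrightarrow> \<not> (a*b) dvd 1"
  using dvd_mult_right by blast

lemma unit_plus_nonunit:
  fixes u m :: "'a::comm_ring_1"
  assumes I: "is_ideal {a::'a. \<not> a dvd 1}" and "u dvd 1" "\<not> m dvd 1"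
  shows "(u + m) dvd 1"
proof (rule ccontr)
  assume "\<not> (u + m) dvd 1"
  moreover have "\<not> ((-1) * m) dvd 1" using I assms(3) unfolding is_ideal_def by blast
  ultimately have "\<not> ((u + m) + (-1) * m) dvd 1" using I unfolding is_ideal_def by blast
  thus False using assms(2) by simp
qed

lemma coeff_unit:
  fixes g h :: "'a::comm_ring_1 poly"
  assumes I: "is_ideal {a::'a. \<not> a dvd 1}" and "i0 \<le> n" "coeff g i0 dvd 1" "coeff h (n-i0) dvd 1"
    and rest: "\<forall>i\<le>n. i \<noteq> i0 \<longrightarrow> \<not> coeff g i dvd 1 \<or> \<not> coeff h (n-i) dvd 1"
  shows "coeff (g*h) n dvd 1"
proof -
  have "coeff (g*h) n = coeff g i0 * coeff h (n-i0) + (\<Sum>i\<in>{..n}-{i0}. coeff g i * coeff h (n-i))"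
    unfolding coeff_mult using assms(2) by (simp add: sum.remove)
  moreover have "(\<Sum>i\<in>{..n}-{i0}. coeff g i * coeff h (n-i)) \<in> {a. \<not> a dvd 1}"
    by (rule ideal_sum[OF I]) (insert rest, auto dest: dvd_mult_left dvd_mult_right)
  moreover have "(coeff g i0 * coeff h (n-i0)) dvd 1" using assms(3,4) by (metis mult_dvd_mono mult_1_left)
  ultimately show ?thesis using unit_plus_nonunit[OF I] by simp
qed

lemma all_nonunit:
  fixes g h :: "'a::comm_ring_1 poly"
  assumes I: "is_ideal {a::'a. \<not> a dvd 1}" and "\<forall>i. \<not> coeff g i dvd 1"
  shows "\<not> coeff (g*h) n dvd 1"
proof -
  have "(\<Sum>i\<le>n. coeff g i * coeff h (n-i)) \<in> {a. \<not> a dvd 1}"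
    by (rule ideal_sum[OF I]) (use assms(2) nonunit_multL in auto)
  thus ?thesis unfolding coeff_mult by simp
qed

definition Ug :: "'a::comm_ring_1 poly \<Rightarrow> nat set" where "Ug g = {i. coeff g i dvd 1}"

lemma Ug_finite: "finite (Ug g)"
proof -
  have "Ug g \<subseteq> {..degree g}" unfolding Ug_def
    by (auto intro!: le_degree)
  thus ?thesis using finite_subset by blast
qed

lemma max_min:
  fixes g h :: "'a::comm_ring_1 poly"
  assumes I: "is_ideal {a::'a. \<not> a dvd 1}" and ne: "Ug g \<noteq> {}" "Ug h \<noteq> {}"
  shows "coeff (g*h) (Max (Ug g) + Max (Ug h)) dvd 1"
    and "coeff (g*h) (Min (Ug g) + Min (Ug h)) dvd 1"
proof -
  let ?S1 = "Max (Ug g)" and ?S2 = "Max (Ug h)"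
  have s1: "?S1 \<in> Ug g" "?S2 \<in> Ug h" using ne Ug_finite by (auto intro: Max_in Min_in)
  have le: "\<And>i. i \<in> Ug g \<Longrightarrow> i \<le> ?S1" "\<And>i. i \<in> Ug h \<Longrightarrow> i \<le> ?S2" using Ug_finite by (auto intro: Max_ge)
  show "coeff (g*h) (?S1 + ?S2) dvd 1"
  proof (rule coeff_unit[OF I, of ?S1])
    show "\<forall>i\<le>?S1 + ?S2. i \<noteq> ?S1 \<longrightarrow> \<not> coeff g i dvd 1 \<or> \<not> coeff h (?S1 + ?S2 - i) dvd 1"
    proof (intro allI impI)
      fix i assume "i \<le> ?S1 + ?S2" "i \<noteq> ?S1"
      show "\<not> coeff g i dvd 1 \<or> \<not> coeff h (?S1 + ?S2 - i) dvd 1"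
      proof (cases "i > ?S1")
        case True thus ?thesis using le(1)[of i] unfolding Ug_def by auto
      next
        case False
        hence "?S1 + ?S2 - i > ?S2" using \<open>i \<noteq> ?S1\<close> by auto
        thus ?thesis using le(2)[of "?S1 + ?S2 - i"] unfolding Ug_def by auto
      qed
    qed
  qed (use s1 in \<open>auto simp: Ug_def\<close>)
next
  let ?S1 = "Min (Ug g)" and ?S2 = "Min (Ug h)"
  have s1: "?S1 \<in> Ug g" "?S2 \<in> Ug h" using ne Ug_finite by (auto intro: Max_in Min_in)
  have le: "\<And>i. i \<in> Ug g \<Longrightarrow> i \<ge> ?S1" "\<And>i. i \<in> Ug h \<Longrightarrow> i \<ge> ?S2" using Ug_finite by (auto intro: Min_le)
  show "coeff (g*h) (?S1 + ?S2) dvd 1"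
  proof (rule coeff_unit[OF I, of ?S1])
    show "\<forall>i\<le>?S1 + ?S2. i \<noteq> ?S1 \<longrightarrow> \<not> coeff g i dvd 1 \<or> \<not> coeff h (?S1 + ?S2 - i) dvd 1"
    proof (intro allI impI)
      fix i assume "i \<le> ?S1 + ?S2" "i \<noteq> ?S1"
      show "\<not> coeff g i dvd 1 \<or> \<not> coeff h (?S1 + ?S2 - i) dvd 1"
      proof (cases "i < ?S1")
        case True thus ?thesis using le(1)[of i] unfolding Ug_def by auto
      next
        case False
        hence "?S1 + ?S2 - i < ?S2" using \<open>i \<noteq> ?S1\<close> \<open>i \<le> ?S1 + ?S2\<close> by auto
        thus ?thesis using le(2)[of "?S1 + ?S2 - i"] unfolding Ug_def by auto
      qed
    qed
  qed (use s1 in \<open>auto simp: Ug_def\<close>)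
qed

lemma unit_poly:
  fixes g :: "'a::comm_ring_1 poly"
  assumes I: "is_ideal {a::'a. \<not> a dvd 1}"
    and sq: "\<forall>a b::'a. \<not> a dvd 1 \<longrightarrow> \<not> b dvd 1 \<longrightarrow> a * b = 0"
    and U: "Ug g = {0}"
  shows "g dvd 1"
proof -
  define c where "c = coeff g 0"
  have "c dvd 1" using U unfolding Ug_def c_def by auto
  then obtain c' where cc: "1 = c * c'" by (auto simp: dvd_def)
  define N where "N = g - [:c:]"
  have Nc: "\<not> coeff N i dvd 1" for i
  proof (cases i)
    case 0 thus ?thesis by (simp add: N_def c_def)
  next
    case (Suc k)
    hence "i \<notin> Ug g" using U by auto
    thus ?thesis using Suc by (simp add: N_def Ug_def)
  qed
  have NN: "N * N = 0"
    by (rule poly_eqI) (simp add: coeff_mult sq Nc)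
  have g: "g = [:c:] + N" by (simp add: N_def)
  have "g * ([:c':] - smult (c'*c') N) = 1"
  proof -
    have "g * ([:c':] - smult (c'*c') N) = [:c*c':] + smult c' N - smult (c*c'*c') N - smult (c'*c') (N*N)"
      unfolding g by (simp add: algebra_simps smult_add_right)
    also have "\<dots> = 1" using cc NN by (simp add: mult.commute)
    finally show ?thesis .
  qed
  thus ?thesis by (metis dvdI)
qed

lemma Ug_ne:
  fixes g h :: "'a::comm_ring_1 poly"
  assumes I: "is_ideal {a::'a. \<not> a dvd 1}" and "coeff (g*h) p dvd 1"
  shows "Ug g \<noteq> {}" "Ug h \<noteq> {}"
proof -
  show "Ug g \<noteq> {}"
  proof
    assume "Ug g = {}" hence "\<forall>i. \<not> coeff g i dvd 1" by (auto simp: Ug_def)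
    from all_nonunit[OF I this] assms(2) show False by blast
  qed
  show "Ug h \<noteq> {}"
  proof
    assume "Ug h = {}" hence "\<forall>i. \<not> coeff h i dvd 1" by (auto simp: Ug_def)
    from all_nonunit[OF I this, of g p] assms(2) show False by (simp add: mult.commute)
  qed
qed

lemma irr:
  fixes f :: "'a::comm_ring_1 poly"
  assumes I: "is_ideal {a::'a. \<not> a dvd 1}"
    and sq: "\<forall>a b::'a. \<not> a dvd 1 \<longrightarrow> \<not> b dvd 1 \<longrightarrow> a * b = 0"
    and uf: "\<forall>i. coeff f i dvd 1 \<longleftrightarrow> i = p" and p: "p > 0" and f0: "coeff f 0 \<noteq> 0"
  shows "irreducible f"
proof -
  have Uf: "Ug f = {p}" using uf by (auto simp: Ug_def)
  have fnz: "f \<noteq> 0" using f0 by auto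
  have nu: "\<not> f dvd 1"
  proof
    assume "f dvd 1"
    then obtain g where g: "1 = f * g" by (auto simp: dvd_def)
    have "coeff (f*g) 0 dvd 1" using g[symmetric] by simp
    note ne = Ug_ne[OF I this]
    have "coeff (1::'a poly) (Max (Ug f) + Max (Ug g)) dvd 1"
      using max_min(1)[OF I ne] g by simp
    hence "Max (Ug f) + Max (Ug g) = 0" by (cases "Max (Ug f) + Max (Ug g) = 0") auto
    thus False using Uf p by simp
  qed
  have fac: "g dvd 1 \<or> h dvd 1" if fgh: "f = g * h" for g h
  proof -
    have "coeff (g*h) p dvd 1" using fgh uf by simp
    note ne = Ug_ne[OF I this]
    have mx: "Max (Ug g) + Max (Ug h) = p" and mn: "Min (Ug g) + Min (Ug h) = p"
      using max_min[OF I ne] fgh Uf by (auto simp: Ug_def)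
    have le: "Min (Ug g) \<le> Max (Ug g)" "Min (Ug h) \<le> Max (Ug h)"
      using Max_ge[OF Ug_finite Min_in[OF Ug_finite ne(1)]] Max_ge[OF Ug_finite Min_in[OF Ug_finite ne(2)]] by auto
    have eq: "Min (Ug g) = Max (Ug g)" "Min (Ug h) = Max (Ug h)" using mx mn le by auto
    have c0: "coeff f 0 = coeff g 0 * coeff h 0" using fgh by (simp add: coeff_mult)
    have "coeff g 0 dvd 1 \<or> coeff h 0 dvd 1" using sq c0 f0 by auto
    thus ?thesis
    proof
      assume "coeff g 0 dvd 1"
      hence "0 \<in> Ug g" by (simp add: Ug_def)
      hence z: "Min (Ug g) = 0" using Min_le[OF Ug_finite, of 0 g] by simp
      have "Ug g = {0}"
      proof
        show "Ug g \<subseteq> {0}"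
        proof
          fix x assume "x \<in> Ug g"
          hence "x \<le> Max (Ug g)" using Max_ge[OF Ug_finite] by blast
          thus "x \<in> {0}" using z eq(1) by simp
        qed
      qed (use \<open>0 \<in> Ug g\<close> in simp)
      thus ?thesis using unit_poly[OF I sq] by blast
    next
      assume "coeff h 0 dvd 1"
      hence "0 \<in> Ug h" by (simp add: Ug_def)
      hence z: "Min (Ug h) = 0" using Min_le[OF Ug_finite, of 0 h] by simp
      have "Ug h = {0}"
      proof
        show "Ug h \<subseteq> {0}"
        proof
          fix x assume "x \<in> Ug h"
          hence "x \<le> Max (Ug h)" using Max_ge[OF Ug_finite] by blast
          thus "x \<in> {0}" using z eq(2) by simp
        qed
      qed (use \<open>0 \<in> Ug h\<close> in simp)
      thus ?thesis using unit_poly[OF I sq] by blast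
    qed
  qed
  show ?thesis unfolding irreducible_def using fnz nu fac by blast
qed

theorem lemma4p12:
  fixes n :: nat
  assumes "artinian_ring TYPE('a::comm_ring_1)"
    and "local_ring TYPE('a)"
    and "max_ideal \<noteq> {0 :: 'a}"
    and "\<forall>a\<in>(max_ideal :: 'a set). \<forall>b\<in>max_ideal. a * b = 0"
    and "n \<ge> 7"
  shows "3 \<in> lengths ([:0, 1:] ^ n :: 'a poly)"
proof -
  have I: "is_ideal {a::'a. \<not> a dvd 1}" using assms(2) by (simp add: local_ring_def)
  have sq: "\<forall>a b::'a. \<not> a dvd 1 \<longrightarrow> \<not> b dvd 1 \<longrightarrow> a * b = 0"
    using assms(4) by (simp add: max_ideal_def)
  have "(0::'a) \<in> max_ideal" by (simp add: max_ideal_def)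
  then obtain a :: 'a where a: "\<not> a dvd 1" "a \<noteq> 0" using assms(3) by (auto simp: max_ideal_def)
  have aa: "a * a = 0" using sq a by blast
  have na: "\<not> (-a) dvd 1" using a by simp
  obtain p q where pq: "0 < p" "p < q" "n = p + 2*q"
  proof (cases "even n")
    case True
    then obtain k where "n = 2*k" by blast
    thus ?thesis using that[of 2 "k - 1"] assms(5) by auto
  next
    case False
    then obtain k where "n = 2*k+1" using oddE by blast
    thus ?thesis using that[of 1 k] assms(5) by auto
  qed
  define f1 :: "'a poly" where "f1 = monom 1 p + [:a:]"
  define f2 :: "'a poly" where "f2 = monom 1 q + [:a:]"
  define f3 :: "'a poly" where "f3 = monom 1 q - [:a:] - monom a (q-p)"
  have i1: "irreducible f1"
    by (rule irr[OF I sq, of _ p]) (use pq a in \<open>auto simp: f1_def coeff_monom coeff_pCons'\<close>)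
  have i2: "irreducible f2"
    by (rule irr[OF I sq, of _ q]) (use pq a in \<open>auto simp: f2_def coeff_monom coeff_pCons'\<close>)
  have i3: "irreducible f3"
    by (rule irr[OF I sq, of _ q]) (use pq a na in \<open>auto simp: f3_def coeff_monom coeff_pCons'\<close>)
  define y :: "'a poly" where "y = monom 1 (q-p)"
  define z :: "'a poly" where "z = monom 1 p"
  define A :: "'a poly" where "A = [:a:]"
  have AA: "A * A = 0" using aa by (simp add: A_def)
  have e1: "f1 = z + A" by (simp add: f1_def z_def A_def)
  have mq: "monom (1::'a) q = y * z" using pq by (simp add: y_def z_def mult_monom)
  have e2: "f2 = y*z + A" by (simp add: f2_def mq A_def)
  have e3: "f3 = y*z - A - A*y" by (simp add: f3_def mq A_def y_def smult_monom)
  have AA': "A*(A*t) = 0" for t by (simp add: mult.assoc[symmetric] AA)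
  have "f1 * f2 * f3 = y^2*z^3"
    unfolding e1 e2 e3 by (simp add: algebra_simps power2_eq_square power3_eq_cube AA AA')
  also have "\<dots> = monom 1 (3 * p + (q - p) * 2)" by (simp add: y_def z_def mult_monom monom_power power3_eq_cube)
  also have "\<dots> = monom 1 n" using pq by (intro arg_cong[where f="monom 1"]) simp
  also have "\<dots> = [:0,1:]^n" by (simp add: monom_altdef)
  finally have prod: "prod_list [f1,f2,f3] = [:0,1:]^n" by (simp add: mult.assoc)
  show ?thesis unfolding lengths_def
    using i1 i2 i3 prod by (intro CollectI conjI exI[of _ "[f1,f2,f3]"]) auto
qed

end
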